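(* Let $\mathcal{X}\subseteq\mathbb{R}^d$ be nonempty, closed and convex, let $f:\mathbb{R}^d\to\mathbb{R}$ be differentiable, $L$-smooth and $\mu$-strongly convex on $\mathcal{X}$ ($0<\mu\le L$), and assume $\mathcal{X}_\star:=\operatorname{arg\,min}_{x\in\mathcal{X}} f(x)$ is nonempty. Let $\{x_k\}_{k\ge0}$ be generated by the Local LMO iteration $x_{k+1}\in\operatorname{arg\,min}_{z\in\mathcal{X}\cap\mathcal{B}(x_k,t_k)}\langle\nabla f(x_k),z\rangle$ with $x_0\in\mathcal{X}$, and let $x_\star\in\mathcal{X}_\star$. Set $\theta=\frac{2\sqrt{\mu L}}{L+\mu}$. Fix $k\ge0$; if $\nabla f(x_k)\ne\nabla f(x_\star)$ and $t_k=\theta\|x_k-x_\star\|$, then $$\|x_{k+1}-x_\star\|^2\le(1-\theta^2)\|x_k-x_\star\|^2=\Big(\frac{L-\mu}{L+\mu}\Big)^2\|x_k-x_\star\|^2.$$ Hence, with the radii $t_k=\theta\|x_k-x_\star\|$ used at every iteration, for any $K\ge0$, $$\|x_K-x_\star\|^2\le\Big(\frac{L-\mu}{L+\mu}\Big)^{2K}\|x_0-x_\star\|^2.$$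
   Context: $\|\cdot\|$ is the Euclidean norm, $\mathcal{B}(x,t):=\{y:\|y-x\|\le t\}$. $L$-smooth: $\nabla f$ is $L$-Lipschitz. $\mu$-strongly convex: $f(y)\ge f(x)+\langle\nabla f(x),y-x\rangle+\frac{\mu}{2}\|y-x\|^2$. *)

theory Defs
  imports "HOL-Analysis.Analysis"
begin

end

theory Submission
  imports Defs
begin

context
  fixes X :: "'a::euclidean_space set" and f :: "'a \<Rightarrow> real" and g :: "'a \<Rightarrow> 'a" and L \<mu> :: real
  assumes cX: "convex X"
  and grad: "\<And>y. (f has_derivative (\<lambda>h. g y \<bullet> h)) (at y)"
  and smooth: "L-lipschitz_on X g"
  and strong: "\<And>u v. u \<in> X \<Longrightarrow> v \<in> X \<Longrightarrow>
                   f v \<ge> f u + g u \<bullet> (v - u) + \<mu> / 2 * (norm (v - u))\<^sup>2"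
begin

lemma descent:
  assumes p: "p \<in> X" and q: "q \<in> X"
  shows "f q \<le> f p + g p \<bullet> (q - p) + L / 2 * (norm (q - p))\<^sup>2"
proof -
  define v where "v = q - p"
  define \<psi> where "\<psi> s = f (p + s *\<^sub>R v) - s * (g p \<bullet> v) - L / 2 * s\<^sup>2 * (norm v)\<^sup>2" for s
  have der: "DERIV \<psi> s :> (g (p + s *\<^sub>R v) \<bullet> v - g p \<bullet> v - L * s * (norm v)\<^sup>2)" for s
  proof -
    have "((\<lambda>s. p + s *\<^sub>R v) has_derivative (\<lambda>h. h *\<^sub>R v)) (at s)"
      by (auto intro!: derivative_eq_intros)
    from diff_chain_at[OF this grad]
    have c1: "((\<lambda>s. f (p + s *\<^sub>R v)) has_derivative (\<lambda>h. h * (g (p + s *\<^sub>R v) \<bullet> v))) (at s)"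
      by (simp add: o_def)
    have eq: "(\<lambda>h. h * c) = (*) c" for c :: real by (auto simp: fun_eq_iff)
    have d1: "((\<lambda>s. f (p + s *\<^sub>R v)) has_real_derivative (g (p + s *\<^sub>R v) \<bullet> v)) (at s)"
      unfolding has_field_derivative_def using c1[unfolded eq] .
    show ?thesis unfolding \<psi>_def
      by (rule derivative_eq_intros d1 refl | simp)+
  qed
  have "\<psi> 0 \<ge> \<psi> 1"
  proof (rule DERIV_nonpos_imp_nonincreasing[of 0 1])
    fix s :: real assume s: "0 \<le> s" "s \<le> 1"
    have ps: "p + s *\<^sub>R v \<in> X"
    proof -
      have "p + s *\<^sub>R v = (1-s) *\<^sub>R p + s *\<^sub>R q" by (simp add: v_def algebra_simps)
      thus ?thesis using convexD[OF cX p q, of "1-s" s] s by simp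
    qed
    have "g (p + s *\<^sub>R v) \<bullet> v - g p \<bullet> v = (g (p + s *\<^sub>R v) - g p) \<bullet> v" by (simp add: inner_diff_left)
    also have "\<dots> \<le> norm (g (p + s *\<^sub>R v) - g p) * norm v" by (rule norm_cauchy_schwarz)
    also have "\<dots> \<le> L * norm (s *\<^sub>R v) * norm v"
      using lipschitz_on_normD[OF smooth ps p] by (simp add: mult_right_mono)
    also have "\<dots> = L * s * (norm v)\<^sup>2" using s by (simp add: power2_eq_square)
    finally have "g (p + s *\<^sub>R v) \<bullet> v - g p \<bullet> v - L * s * (norm v)\<^sup>2 \<le> 0" by simp
    thus "\<exists>y. DERIV \<psi> s :> y \<and> y \<le> 0" using der by blast
  qed simp
  thus ?thesis unfolding \<psi>_def v_def by simp
qed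

lemma nsq: "(norm (x - y))\<^sup>2 = (norm x)\<^sup>2 - 2 * (x \<bullet> y) + (norm y)\<^sup>2"
  for x y :: "'b::real_inner"
  unfolding power2_norm_eq_inner by (simp add: inner_diff_left inner_diff_right inner_commute[of y x])

lemma local_ineq:
  assumes a: "a \<in> X" and b: "b \<in> X" and y1: "b + s *\<^sub>R w \<in> X" and y2: "a - s *\<^sub>R w \<in> X"
  shows "(g a - g b - \<mu> *\<^sub>R (a - b)) \<bullet> (a - b) \<ge>
           2 * s * ((g a - g b - \<mu> *\<^sub>R (a - b)) \<bullet> w) - (L - \<mu>) * s\<^sup>2 * (norm w)\<^sup>2"
proof -
  have 1: "f (b + s *\<^sub>R w) \<ge> f a + g a \<bullet> ((b + s *\<^sub>R w) - a) + \<mu> / 2 * (norm ((b + s *\<^sub>R w) - a))\<^sup>2"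
    using strong[OF a y1] .
  have 2: "f (b + s *\<^sub>R w) \<le> f b + g b \<bullet> ((b + s *\<^sub>R w) - b) + L / 2 * (norm ((b + s *\<^sub>R w) - b))\<^sup>2"
    using descent[OF b y1] .
  have 3: "f (a - s *\<^sub>R w) \<ge> f b + g b \<bullet> ((a - s *\<^sub>R w) - b) + \<mu> / 2 * (norm ((a - s *\<^sub>R w) - b))\<^sup>2"
    using strong[OF b y2] .
  have 4: "f (a - s *\<^sub>R w) \<le> f a + g a \<bullet> ((a - s *\<^sub>R w) - a) + L / 2 * (norm ((a - s *\<^sub>R w) - a))\<^sup>2"
    using descent[OF a y2] .
  have n1: "(norm ((b + s *\<^sub>R w) - a))\<^sup>2 = (norm (a - b))\<^sup>2 - 2 * s * ((a - b) \<bullet> w) + s\<^sup>2 * (norm w)\<^sup>2"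
    using nsq[of "s *\<^sub>R w" "a - b"] by (simp add: inner_commute[of w] power_mult_distrib algebra_simps)
  have n3: "(norm ((a - s *\<^sub>R w) - b))\<^sup>2 = (norm (a - b))\<^sup>2 - 2 * s * ((a - b) \<bullet> w) + s\<^sup>2 * (norm w)\<^sup>2"
    using nsq[of "a - b" "s *\<^sub>R w"] by (simp add: power_mult_distrib algebra_simps)
  have n2: "(norm ((b + s *\<^sub>R w) - b))\<^sup>2 = s\<^sup>2 * (norm w)\<^sup>2" by (simp add: power_mult_distrib)
  have n4: "(norm ((a - s *\<^sub>R w) - a))\<^sup>2 = s\<^sup>2 * (norm w)\<^sup>2" by (simp add: power_mult_distrib)
  have i1: "g a \<bullet> ((b + s *\<^sub>R w) - a) = - (g a \<bullet> (a - b)) + s * (g a \<bullet> w)"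
    by (simp add: inner_diff_right inner_add_right)
  have i2: "g b \<bullet> ((b + s *\<^sub>R w) - b) = s * (g b \<bullet> w)" by simp
  have i3: "g b \<bullet> ((a - s *\<^sub>R w) - b) = g b \<bullet> (a - b) - s * (g b \<bullet> w)"
    by (simp add: inner_diff_right)
  have i4: "g a \<bullet> ((a - s *\<^sub>R w) - a) = - s * (g a \<bullet> w)" by simp
  have lhs: "(g a - g b - \<mu> *\<^sub>R (a - b)) \<bullet> (a - b) = g a \<bullet> (a - b) - g b \<bullet> (a - b) - \<mu> * (norm (a - b))\<^sup>2"
    by (simp add: inner_diff_left power2_norm_eq_inner)
  have rhs: "(g a - g b - \<mu> *\<^sub>R (a - b)) \<bullet> w = g a \<bullet> w - g b \<bullet> w - \<mu> * ((a - b) \<bullet> w)"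
    by (simp add: inner_diff_left)
  show ?thesis unfolding lhs rhs
    using 1 2 3 4 unfolding n1 n2 n3 n4 i1 i2 i3 i4 by (simp add: algebra_simps)
qed

lemma tele:
  assumes N: "N > 0"
    and P: "\<And>i. i \<le> N \<Longrightarrow> b + (real i / real N) *\<^sub>R (a - b) \<in> X
              \<and> b + (real i / real N) *\<^sub>R (a - b) + s *\<^sub>R w \<in> X
              \<and> b + (real i / real N) *\<^sub>R (a - b) - s *\<^sub>R w \<in> X"
  shows "(g a - g b - \<mu> *\<^sub>R (a - b)) \<bullet> (a - b) \<ge>
           2 * (N * s) * ((g a - g b - \<mu> *\<^sub>R (a - b)) \<bullet> w) - (L - \<mu>) * (N * s)\<^sup>2 * (norm w)\<^sup>2"
proof -
  define p where "p i = b + (real i / real N) *\<^sub>R (a - b)" for i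
  define G where "G x = g x - \<mu> *\<^sub>R x" for x
  define \<delta> where "\<delta> = (1 / real N) *\<^sub>R (a - b)"
  have pd: "p (Suc i) - p i = \<delta>" for i
  proof -
    have "p (Suc i) - p i = (real (Suc i) / N - real i / N) *\<^sub>R (a - b)" by (simp add: p_def scaleR_diff_left)
    also have "real (Suc i) / N - real i / N = 1 / N" by (simp add: diff_divide_distrib[symmetric])
    finally show ?thesis by (simp add: \<delta>_def)
  qed
  have Gd: "g x - g y - \<mu> *\<^sub>R (x - y) = G x - G y" for x y
    by (simp add: G_def algebra_simps)
  have ind: "n \<le> N \<Longrightarrow> (G (p n) - G (p 0)) \<bullet> \<delta> \<ge> 2 * s * ((G (p n) - G (p 0)) \<bullet> w) - real n * ((L - \<mu>) * s\<^sup>2 * (norm w)\<^sup>2)" for n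
  proof (induction n)
    case 0 then show ?case by simp
  next
    case (Suc n)
    have a1: "p (Suc n) \<in> X" "p n \<in> X" "p n + s *\<^sub>R w \<in> X" "p (Suc n) - s *\<^sub>R w \<in> X"
      using P[of n] P[of "Suc n"] Suc.prems unfolding p_def by auto
    have l: "(G (p (Suc n)) - G (p n)) \<bullet> \<delta> \<ge> 2 * s * ((G (p (Suc n)) - G (p n)) \<bullet> w) - (L - \<mu>) * s\<^sup>2 * (norm w)\<^sup>2"
      using local_ineq[OF a1, unfolded Gd, unfolded pd] .
    have e1: "G (p (Suc n)) - G (p 0) = (G (p (Suc n)) - G (p n)) + (G (p n) - G (p 0))" by simp
    show ?case using Suc.IH Suc.prems l unfolding e1 inner_add_left by (simp add: algebra_simps)
  qed
  from ind[of N] have "(G (p N) - G (p 0)) \<bullet> \<delta> \<ge> 2 * s * ((G (p N) - G (p 0)) \<bullet> w) - real N * ((L - \<mu>) * s\<^sup>2 * (norm w)\<^sup>2)" by simp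
  hence "real N * ((G (p N) - G (p 0)) \<bullet> \<delta>) \<ge> real N * (2 * s * ((G (p N) - G (p 0)) \<bullet> w) - real N * ((L - \<mu>) * s\<^sup>2 * (norm w)\<^sup>2))"
    using N by (intro mult_left_mono) auto
  moreover have "p N = a" "p 0 = b" using N by (auto simp: p_def)
  moreover have "real N * ((G a - G b) \<bullet> \<delta>) = (G a - G b) \<bullet> (a - b)" using N by (simp add: \<delta>_def)
  ultimately show ?thesis unfolding Gd by (simp add: algebra_simps power2_eq_square)
qed

lemma conv3:
  assumes a: "a \<in> X" and b: "b \<in> X" and z: "z \<in> X"
    and c: "0 \<le> u" "0 \<le> v" "0 \<le> t" "u + v + t = 1"
  shows "u *\<^sub>R a + v *\<^sub>R b + t *\<^sub>R z \<in> X"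
proof -
  have "convex hull {a, b, z} \<subseteq> X" using a b z cX by (intro hull_minimal) auto
  moreover have "u *\<^sub>R a + v *\<^sub>R b + t *\<^sub>R z \<in> convex hull {a, b, z}"
    unfolding convex_hull_3 using c by blast
  ultimately show ?thesis by blast
qed

lemma mid_in:
  assumes a: "a \<in> X" and b: "b \<in> X" and z: "z \<in> X"
    and sig: "\<bar>\<sigma>\<bar> * (\<bar>\<alpha>\<bar> + \<bar>\<beta>\<bar>) \<le> 1/3"
  shows "(1/3) *\<^sub>R (a + b + z) + \<sigma> *\<^sub>R (\<alpha> *\<^sub>R (a - b) + \<beta> *\<^sub>R (z - a)) \<in> X"
proof -
  have eq: "(1/3) *\<^sub>R (a + b + z) + \<sigma> *\<^sub>R (\<alpha> *\<^sub>R (a - b) + \<beta> *\<^sub>R (z - a))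
      = (1/3 + \<sigma>*\<alpha> - \<sigma>*\<beta>) *\<^sub>R a + (1/3 - \<sigma>*\<alpha>) *\<^sub>R b + (1/3 + \<sigma>*\<beta>) *\<^sub>R z"
    by (simp add: algebra_simps)
  have h1: "\<bar>\<sigma>*\<alpha>\<bar> \<le> \<bar>\<sigma>\<bar> * (\<bar>\<alpha>\<bar> + \<bar>\<beta>\<bar>)" "\<bar>\<sigma>*\<beta>\<bar> \<le> \<bar>\<sigma>\<bar> * (\<bar>\<alpha>\<bar> + \<bar>\<beta>\<bar>)"
    "\<bar>\<sigma>*\<alpha>\<bar> + \<bar>\<sigma>*\<beta>\<bar> = \<bar>\<sigma>\<bar> * (\<bar>\<alpha>\<bar> + \<bar>\<beta>\<bar>)"
    by (auto simp: abs_mult algebra_simps mult_left_mono)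
  show ?thesis unfolding eq
    by (rule conv3[OF a b z]) (use h1 sig in \<open>auto simp: abs_le_iff\<close>)
qed

lemma family:
  assumes a: "a \<in> X" and b: "b \<in> X" and z: "z \<in> X" and S: "S \<ge> 0"
    and w: "w = \<alpha> *\<^sub>R (a - b) + \<beta> *\<^sub>R (z - a)"
  shows "(g a - g b - \<mu> *\<^sub>R (a - b)) \<bullet> (a - b) \<ge>
           2 * S * ((g a - g b - \<mu> *\<^sub>R (a - b)) \<bullet> w) - (L - \<mu>) * S\<^sup>2 * (norm w)\<^sup>2"
proof -
  define m where "m = (1/3) *\<^sub>R (a + b + z)"
  define A where "A = \<bar>\<alpha>\<bar> + \<bar>\<beta>\<bar>"
  define \<Phi> where "\<Phi> x y = (g x - g y - \<mu> *\<^sub>R (x - y)) \<bullet> (x - y) -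
           2 * S * ((g x - g y - \<mu> *\<^sub>R (x - y)) \<bullet> w) + (L - \<mu>) * S\<^sup>2 * (norm w)\<^sup>2" for x y
  define sh where "sh \<epsilon> x = (1 - \<epsilon>) *\<^sub>R x + \<epsilon> *\<^sub>R m" for \<epsilon> :: real and x
  have mX: "m + \<sigma> *\<^sub>R w \<in> X" if "\<bar>\<sigma>\<bar> * A \<le> 1/3" for \<sigma>
    using mid_in[OF a b z, of \<sigma> \<alpha> \<beta>] that unfolding m_def A_def w by simp
  have shX: "sh \<epsilon> x \<in> X" if "x \<in> X" "0 \<le> \<epsilon>" "\<epsilon> \<le> 1" for x \<epsilon>
    using convexD[OF cX that(1) mX[of 0], of "1 - \<epsilon>" \<epsilon>] that by (simp add: sh_def)
  have pos: "\<Phi> (sh \<epsilon> a) (sh \<epsilon> b) \<ge> 0" if e: "0 < \<epsilon>" "\<epsilon> \<le> 1" for \<epsilon>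
  proof -
    define N :: nat where "N = nat \<lceil>3 * S * A / \<epsilon>\<rceil> + 1"
    have N0: "N > 0" by (simp add: N_def)
    have NA: "3 * S * A / \<epsilon> \<le> real N" unfolding N_def by linarith
    define s where "s = S / real N"
    have Ns: "real N * s = S" using N0 by (simp add: s_def)
    have sA: "\<bar>s / \<epsilon>\<bar> * A \<le> 1/3"
    proof -
      have A0: "A \<ge> 0" by (simp add: A_def)
      have "\<bar>s / \<epsilon>\<bar> * A = S * A / (\<epsilon> * real N)" using S e N0 by (simp add: s_def abs_divide)
      also have "\<dots> \<le> 1/3"
        using NA e N0 S A0 by (simp add: field_simps)
      finally show ?thesis .
    qed
    have P: "sh \<epsilon> b + (real i / real N) *\<^sub>R (sh \<epsilon> a - sh \<epsilon> b) \<in> X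
              \<and> sh \<epsilon> b + (real i / real N) *\<^sub>R (sh \<epsilon> a - sh \<epsilon> b) + s *\<^sub>R w \<in> X
              \<and> sh \<epsilon> b + (real i / real N) *\<^sub>R (sh \<epsilon> a - sh \<epsilon> b) - s *\<^sub>R w \<in> X" if i: "i \<le> N" for i
    proof -
      define \<tau> where "\<tau> = real i / real N"
      have \<tau>: "0 \<le> \<tau>" "\<tau> \<le> 1" using i N0 by (auto simp: \<tau>_def)
      define q where "q = b + \<tau> *\<^sub>R (a - b)"
      have qX: "q \<in> X"
        using convexD[OF cX b a, of "1 - \<tau>" \<tau>] \<tau> by (simp add: q_def algebra_simps)
      have eq: "sh \<epsilon> b + \<tau> *\<^sub>R (sh \<epsilon> a - sh \<epsilon> b) + c *\<^sub>R w = (1 - \<epsilon>) *\<^sub>R q + \<epsilon> *\<^sub>R (m + (c / \<epsilon>) *\<^sub>R w)" for c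
        using e by (simp add: sh_def q_def algebra_simps)
      have X1: "(1 - \<epsilon>) *\<^sub>R q + \<epsilon> *\<^sub>R (m + (c / \<epsilon>) *\<^sub>R w) \<in> X" if "\<bar>c / \<epsilon>\<bar> * A \<le> 1/3" for c
        using convexD[OF cX qX mX[OF that], of "1 - \<epsilon>" \<epsilon>] e by simp
      have sA': "\<bar>(-s) / \<epsilon>\<bar> * A \<le> 1/3" "\<bar>0 / \<epsilon>\<bar> * A \<le> 1/3" using sA by auto
      have Y: "sh \<epsilon> b + \<tau> *\<^sub>R (sh \<epsilon> a - sh \<epsilon> b) + c *\<^sub>R w \<in> X" if "\<bar>c / \<epsilon>\<bar> * A \<le> 1/3" for c
        by (subst eq) (rule X1[OF that])
      have eqm: "sh \<epsilon> b + \<tau> *\<^sub>R (sh \<epsilon> a - sh \<epsilon> b) - s *\<^sub>R w = sh \<epsilon> b + \<tau> *\<^sub>R (sh \<epsilon> a - sh \<epsilon> b) + (-s) *\<^sub>R w"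
        by simp
      have y2: "sh \<epsilon> b + \<tau> *\<^sub>R (sh \<epsilon> a - sh \<epsilon> b) - s *\<^sub>R w \<in> X"
        unfolding eqm by (rule Y[OF sA'(1)])
      have y0: "sh \<epsilon> b + \<tau> *\<^sub>R (sh \<epsilon> a - sh \<epsilon> b) \<in> X"
        using Y[OF sA'(2)] by simp
      show ?thesis unfolding \<tau>_def[symmetric] using y0 Y[OF sA] y2 by blast
    qed
    from tele[OF N0 P] show ?thesis unfolding Ns \<Phi>_def by simp
  qed
  define e where "e n = inverse (real (Suc n))" for n
  have e0: "e \<longlonglongrightarrow> 0" unfolding e_def by (rule LIMSEQ_inverse_real_of_nat)
  have e1: "0 < e n" "e n \<le> 1" for n by (auto simp: e_def field_simps)
  have contg: "continuous_on X g" by (rule lipschitz_on_continuous_on[OF smooth])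
  have shl: "(\<lambda>n. sh (e n) x) \<longlonglongrightarrow> x" for x
  proof -
    have "(\<lambda>n. sh (e n) x) \<longlonglongrightarrow> (1 - 0) *\<^sub>R x + 0 *\<^sub>R m"
      unfolding sh_def by (intro tendsto_intros e0)
    thus ?thesis by simp
  qed
  have gl: "(\<lambda>n. g (sh (e n) x)) \<longlonglongrightarrow> g x" if "x \<in> X" for x
  proof (rule continuous_on_tendsto_compose[OF contg shl that])
    show "\<forall>\<^sub>F n in sequentially. sh (e n) x \<in> X"
      using shX[OF that] e1 less_imp_le by (intro always_eventually) blast
  qed
  have "(\<lambda>n. \<Phi> (sh (e n) a) (sh (e n) b)) \<longlonglongrightarrow> \<Phi> a b"
    unfolding \<Phi>_def by (intro tendsto_intros gl a b shl)
  hence "\<Phi> a b \<ge> 0"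
    by (rule tendsto_lowerbound) (use pos e1 in auto)
  thus ?thesis unfolding \<Phi>_def by simp
qed

lemma span2_obtain:
  fixes d e :: "'b::real_vector"
  assumes "v \<in> span {d, e}"
  obtains \<alpha> \<beta> where "v = \<alpha> *\<^sub>R d + \<beta> *\<^sub>R e"
proof -
  from assms obtain k where "v - k *\<^sub>R d \<in> span {e}" using span_breakdown_eq by blast
  then obtain j where "v - k *\<^sub>R d = j *\<^sub>R e" by (auto simp: span_singleton)
  hence "v = k *\<^sub>R d + j *\<^sub>R e" by (simp add: algebra_simps)
  thus ?thesis using that by blast
qed

lemma opt1:
  assumes b: "b \<in> X" and bmin: "\<And>y. y \<in> X \<Longrightarrow> f b \<le> f y" and y: "y \<in> X"
  shows "g b \<bullet> (y - b) \<ge> 0"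
proof (rule ccontr)
  assume neg: "\<not> ?thesis"
  define \<gamma> where "\<gamma> = - (g b \<bullet> (y - b))"
  have \<gamma>: "\<gamma> > 0" using neg by (simp add: \<gamma>_def)
  define v where "v = y - b"
  have L0: "L \<ge> 0" using lipschitz_on_nonneg[OF smooth] .
  define M where "M = L * (norm v)\<^sup>2 + 1"
  have M: "M \<ge> 1" using L0 by (simp add: M_def)
  define s where "s = min 1 (\<gamma> / M)"
  have s: "0 < s" "s \<le> 1" "s \<le> \<gamma> / M" using \<gamma> M by (auto simp: s_def)
  define q where "q = b + s *\<^sub>R v"
  have qX: "q \<in> X"
    using convexD[OF cX b y, of "1 - s" s] s by (simp add: q_def v_def algebra_simps)
  have "f q \<le> f b + g b \<bullet> (q - b) + L / 2 * (norm (q - b))\<^sup>2" by (rule descent[OF b qX])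
  also have "\<dots> = f b + s * (g b \<bullet> v) + L / 2 * (s\<^sup>2 * (norm v)\<^sup>2)"
    using s by (simp add: q_def power_mult_distrib)
  also have "\<dots> = f b - s * \<gamma> + s * (s * (L * (norm v)\<^sup>2)) / 2"
    by (simp add: \<gamma>_def v_def power2_eq_square algebra_simps)
  also have "\<dots> < f b"
  proof -
    have "s * (L * (norm v)\<^sup>2) \<le> \<gamma> / M * (L * (norm v)\<^sup>2)"
      using s L0 by (intro mult_right_mono) auto
    also have "\<dots> < \<gamma>" using \<gamma> M by (simp add: M_def field_simps)
    finally have "s * (L * (norm v)\<^sup>2) < \<gamma>" .
    hence "s * (s * (L * (norm v)\<^sup>2)) < s * \<gamma>" using s by simp
    moreover have "s * \<gamma> > 0" using s \<gamma> by simp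
    ultimately show ?thesis by linarith
  qed
  finally show False using bmin[OF qX] by simp
qed

lemma key:
  assumes a: "a \<in> X" and b: "b \<in> X" and z: "z \<in> X" and mL: "\<mu> \<le> L"
  shows "\<exists>h'. (\<forall>v\<in>span {a - b, z - a}. h' \<bullet> v = (g a - g b) \<bullet> v) \<and>
           (norm (h' - \<mu> *\<^sub>R (a - b)))\<^sup>2 \<le> (L - \<mu>) * (h' \<bullet> (a - b) - \<mu> * (norm (a - b))\<^sup>2)"
proof -
  define d where "d = a - b"
  define h where "h = g a - g b"
  obtain h' r where h': "h' \<in> span {d, z - a}" and r: "\<And>w. w \<in> span {d, z - a} \<Longrightarrow> orthogonal r w"
    and hr: "h = h' + r"
    using orthogonal_subspace_decomp_exists[of "{d, z - a}" h] by metis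
  have same: "h' \<bullet> v = h \<bullet> v" if "v \<in> span {d, z - a}" for v
    using r[OF that] unfolding hr orthogonal_def by (simp add: inner_add_left)
  define D where "D = h' - \<mu> *\<^sub>R d"
  have dspan: "d \<in> span {d, z - a}" by (simp add: span_base)
  have Dspan: "D \<in> span {d, z - a}" unfolding D_def using h' dspan by (intro span_diff span_scale)
  then obtain \<alpha> \<beta> where Dab: "D = \<alpha> *\<^sub>R d + \<beta> *\<^sub>R (z - a)" by (rule span2_obtain)
  have fam: "(g a - g b - \<mu> *\<^sub>R (a - b)) \<bullet> (a - b) \<ge>
           2 * S * ((g a - g b - \<mu> *\<^sub>R (a - b)) \<bullet> D) - (L - \<mu>) * S\<^sup>2 * (norm D)\<^sup>2" if "S \<ge> 0" for S
    by (rule family[OF a b z that]) (use Dab in \<open>simp add: d_def\<close>)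
  have i1: "(g a - g b - \<mu> *\<^sub>R (a - b)) \<bullet> (a - b) = h' \<bullet> d - \<mu> * (norm d)\<^sup>2"
    using same[OF dspan] by (simp add: h_def d_def inner_diff_left power2_norm_eq_inner)
  have i2: "(g a - g b - \<mu> *\<^sub>R (a - b)) \<bullet> D = (norm D)\<^sup>2"
  proof -
    have "(g a - g b - \<mu> *\<^sub>R (a - b)) \<bullet> D = h \<bullet> D - \<mu> * (d \<bullet> D)"
      by (simp add: h_def d_def inner_diff_left)
    also have "\<dots> = h' \<bullet> D - \<mu> * (d \<bullet> D)" using same[OF Dspan] by simp
    also have "\<dots> = D \<bullet> D" by (simp add: D_def inner_diff_left)
    finally show ?thesis by (simp add: power2_norm_eq_inner)
  qed
  define c where "c = h' \<bullet> d - \<mu> * (norm d)\<^sup>2"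
  define q where "q = (norm D)\<^sup>2"
  have fam2: "c \<ge> 2 * S * q - (L - \<mu>) * S\<^sup>2 * q" if "S \<ge> 0" for S
    using fam[OF that] unfolding i1 i2 c_def q_def .
  have q0: "q \<ge> 0" by (simp add: q_def)
  have "q \<le> (L - \<mu>) * c"
  proof (cases "L - \<mu> > 0")
    case True
    have "c \<ge> 2 * (1 / (L - \<mu>)) * q - (L - \<mu>) * (1 / (L - \<mu>))\<^sup>2 * q"
      using fam2[of "1 / (L - \<mu>)"] True by simp
    also have "2 * (1 / (L - \<mu>)) * q - (L - \<mu>) * (1 / (L - \<mu>))\<^sup>2 * q = q / (L - \<mu>)"
    proof -
      have "\<forall>k>0. 2 * (1 / k) * q - k * (1 / k)\<^sup>2 * q = q / k" by (simp add: power2_eq_square field_simps)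
      thus ?thesis using True by blast
    qed
    finally show ?thesis using True by (simp add: field_simps)
  next
    case False
    hence k0: "L - \<mu> = 0" using mL by simp
    have "q = 0"
    proof (rule ccontr)
      assume "q \<noteq> 0"
      hence qp: "q > 0" using q0 by simp
      have "c \<ge> 2 * ((\<bar>c\<bar> + 1) / q) * q" using fam2[of "(\<bar>c\<bar> + 1) / q"] qp k0 by simp
      also have "2 * ((\<bar>c\<bar> + 1) / q) * q = 2 * (\<bar>c\<bar> + 1)" using qp by simp
      finally show False by (cases "c \<ge> 0") auto
    qed
    thus ?thesis using k0 by simp
  qed
  moreover have "\<forall>v\<in>span {a - b, z - a}. h' \<bullet> v = (g a - g b) \<bullet> v"
    using same unfolding h_def d_def by blast
  ultimately show ?thesis unfolding q_def c_def D_def d_def by blast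
qed

lemma main_step:
  assumes a: "a \<in> X" and b: "b \<in> X" and bmin: "\<And>y. y \<in> X \<Longrightarrow> f b \<le> f y"
    and z: "z \<in> X" and zball: "norm (z - a) \<le> \<theta> * norm (a - b)"
    and zmin: "\<And>y. y \<in> X \<Longrightarrow> norm (y - a) \<le> \<theta> * norm (a - b) \<Longrightarrow> g a \<bullet> z \<le> g a \<bullet> y"
    and mu: "0 < \<mu>" "\<mu> \<le> L" and r0: "a \<noteq> b"
    and th: "\<theta> = 2 * sqrt (\<mu> * L) / (L + \<mu>)"
  shows "(norm (z - b))\<^sup>2 \<le> (1 - \<theta>\<^sup>2) * (norm (a - b))\<^sup>2"
proof (rule ccontr)
  assume neg: "\<not> ?thesis"
  define r where "r = norm (a - b)"
  define d where "d = a - b"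
  define e where "e = z - a"
  define u where "u = z - b"
  define t where "t = \<theta> * r"
  have r: "r > 0" using r0 by (simp add: r_def)
  have ude: "u = d + e" by (simp add: u_def d_def e_def)
  have big: "(norm u)\<^sup>2 > (1 - \<theta>\<^sup>2) * r\<^sup>2" using neg by (simp add: u_def r_def)
  have eball: "norm e \<le> t" using zball by (simp add: e_def t_def r_def)
  have t0: "t \<ge> 0" using eball norm_ge_zero order_trans by blast
  have th0: "\<theta> > 0" using mu by (simp add: th)
  have eu: "2 * (e \<bullet> u) = (norm u)\<^sup>2 - r\<^sup>2 + (norm e)\<^sup>2"
  proof -
    have "d = u - e" by (simp add: ude)
    hence "r\<^sup>2 = (norm u)\<^sup>2 - 2 * (u \<bullet> e) + (norm e)\<^sup>2" using nsq[of u e] by (simp add: r_def d_def)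
    thus ?thesis by (simp add: inner_commute)
  qed
  define \<beta> where "\<beta> = 2 * (e \<bullet> u)"
  define \<delta> where "\<delta> = t\<^sup>2 - (norm e)\<^sup>2"
  have \<delta>0: "\<delta> \<ge> 0" using eball t0 by (simp add: \<delta>_def abs_le_square_iff power_mono)
  have \<beta>\<delta>: "\<beta> > - \<delta>" using big eu by (simp add: \<beta>_def \<delta>_def t_def power_mult_distrib algebra_simps)
  have th1: "\<theta> \<le> 1"
  proof -
    have "sqrt (\<mu> * L) \<le> (\<mu> + L) / 2" using mu by (intro arith_geo_mean_sqrt) auto
    hence "2 * sqrt (\<mu> * L) \<le> L + \<mu>" by simp
    moreover have "L + \<mu> > 0" using mu by simp
    ultimately show ?thesis unfolding th by (simp add: pos_divide_le_eq)
  qed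
  have u0: "(norm u)\<^sup>2 > 0"
  proof -
    have "\<theta>\<^sup>2 \<le> 1" using th1 th0 by (simp add: power_le_one)
    hence "(1 - \<theta>\<^sup>2) * r\<^sup>2 \<ge> 0" by simp
    thus ?thesis using big by linarith
  qed
  obtain s where s: "0 < s" "s \<le> 1" "s\<^sup>2 * (norm u)\<^sup>2 - s * \<beta> \<le> \<delta>"
  proof (cases "\<beta> > 0")
    case True
    define s where "s = min 1 (\<beta> / (norm u)\<^sup>2)"
    have s1: "0 < s" "s \<le> 1" "s \<le> \<beta> / (norm u)\<^sup>2" using True u0 by (auto simp: s_def)
    have "s * (norm u)\<^sup>2 \<le> \<beta>" using s1 u0 by (simp add: field_simps)
    hence "s * (s * (norm u)\<^sup>2) \<le> s * \<beta>" using s1 by (intro mult_left_mono) auto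
    hence "s\<^sup>2 * (norm u)\<^sup>2 - s * \<beta> \<le> 0" by (simp add: power2_eq_square algebra_simps)
    thus ?thesis using that s1 \<delta>0 by auto
  next
    case False
    define M where "M = (norm u)\<^sup>2 + \<bar>\<beta>\<bar> + 1"
    have M: "M > 0" by (simp add: M_def add_nonneg_pos)
    have \<delta>p: "\<delta> > 0" using False \<beta>\<delta> by linarith
    define s where "s = min 1 (\<delta> / M)"
    have s1: "0 < s" "s \<le> 1" "s \<le> \<delta> / M" using \<delta>p M by (auto simp: s_def)
    have "s\<^sup>2 * (norm u)\<^sup>2 \<le> s * (norm u)\<^sup>2"
      using s1 by (intro mult_right_mono) (auto simp: power2_eq_square mult_le_cancel_left1)
    moreover have "- (s * \<beta>) \<le> s * \<bar>\<beta>\<bar>" using mult_left_mono[of "-\<beta>" "\<bar>\<beta>\<bar>" s] s1 by simp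
    moreover have "s * M \<le> \<delta>" using s1 M by (simp add: field_simps)
    ultimately have "s\<^sup>2 * (norm u)\<^sup>2 - s * \<beta> \<le> \<delta>" using s1(1) unfolding M_def by (simp add: algebra_simps)
    thus ?thesis using that s1 by auto
  qed
  define y where "y = z - s *\<^sub>R u"
  have yX: "y \<in> X"
    using convexD[OF cX z b, of "1 - s" s] s by (simp add: y_def u_def algebra_simps)
  have "(norm (y - a))\<^sup>2 = (norm (e - s *\<^sub>R u))\<^sup>2" by (simp add: y_def e_def algebra_simps)
  also have "\<dots> = (norm e)\<^sup>2 - s * \<beta> + s\<^sup>2 * (norm u)\<^sup>2"
    using nsq[of e "s *\<^sub>R u"] by (simp add: \<beta>_def power_mult_distrib)
  also have "\<dots> \<le> t\<^sup>2" using s(3) by (simp add: \<delta>_def)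
  finally have "norm (y - a) \<le> t" using t0 by (simp add: power2_le_iff_abs_le)
  hence "g a \<bullet> z \<le> g a \<bullet> y" using zmin[OF yX] by (simp add: t_def r_def)
  hence "s * (g a \<bullet> u) \<le> 0" by (simp add: y_def inner_diff_right)
  hence gau: "g a \<bullet> u \<le> 0" using s by (simp add: mult_le_0_iff)
  have gbu: "g b \<bullet> u \<ge> 0" using opt1[OF b bmin z] by (simp add: u_def)
  obtain h' where hs: "\<forall>v\<in>span {a - b, z - a}. h' \<bullet> v = (g a - g b) \<bullet> v"
    and hA: "(norm (h' - \<mu> *\<^sub>R (a - b)))\<^sup>2 \<le> (L - \<mu>) * (h' \<bullet> (a - b) - \<mu> * (norm (a - b))\<^sup>2)"
    using key[OF a b z mu(2)] by blast
  have dsp: "d \<in> span {a - b, z - a}" "e \<in> span {a - b, z - a}"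
    by (auto simp: d_def e_def span_base)
  have usp: "u \<in> span {a - b, z - a}" using dsp unfolding ude by (rule span_add)
  define c where "c = h' \<bullet> d"
  define H where "H = norm h'"
  have hu: "h' \<bullet> u \<le> 0" using hs usp gau gbu by (simp add: inner_diff_left)
  have A: "H\<^sup>2 + \<mu> * L * r\<^sup>2 \<le> (L + \<mu>) * c"
  proof -
    have n1: "(norm (h' - \<mu> *\<^sub>R d))\<^sup>2 = H\<^sup>2 - 2 * \<mu> * c + \<mu>\<^sup>2 * r\<^sup>2"
      using nsq[of h' "\<mu> *\<^sub>R d"] by (simp add: H_def c_def r_def d_def power_mult_distrib)
    have hA': "(norm (h' - \<mu> *\<^sub>R d))\<^sup>2 \<le> (L - \<mu>) * (c - \<mu> * r\<^sup>2)"
      using hA by (simp add: c_def d_def r_def)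
    have e1: "(L - \<mu>) * (c - \<mu> * r\<^sup>2) = L * c - \<mu> * c - \<mu> * L * r\<^sup>2 + \<mu>\<^sup>2 * r\<^sup>2"
      by (simp add: algebra_simps power2_eq_square)
    have e2: "(L + \<mu>) * c = L * c + \<mu> * c" by (simp add: algebra_simps)
    show ?thesis using n1 hA' unfolding e1 e2 by linarith
  qed
  have H0: "H > 0"
  proof (rule ccontr)
    assume "\<not> H > 0"
    hence "H = 0" by (simp add: H_def)
    hence "c = 0" by (simp add: H_def c_def)
    with A \<open>H = 0\<close> have "\<mu> * L * r\<^sup>2 \<le> 0" by simp
    moreover have "\<mu> * L * r\<^sup>2 > 0" using mu r by simp
    ultimately show False by simp
  qed
  have cth: "c \<ge> \<theta> * H * r"
  proof -
    have sq: "(sqrt (\<mu> * L))\<^sup>2 = \<mu> * L" using mu by simp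
    have "0 \<le> (H - sqrt (\<mu> * L) * r)\<^sup>2" by simp
    hence "2 * sqrt (\<mu> * L) * H * r \<le> H\<^sup>2 + \<mu> * L * r\<^sup>2"
      using sq by (simp add: power2_eq_square algebra_simps)
    hence "2 * sqrt (\<mu> * L) * H * r \<le> (L + \<mu>) * c" using A by linarith
    moreover have "L + \<mu> > 0" using mu by simp
    ultimately show ?thesis by (simp add: th field_simps)
  qed
  have he: "h' \<bullet> e \<le> - c" using hu unfolding ude c_def by (simp add: inner_add_right)
  have cs: "- (h' \<bullet> e) \<le> H * norm e"
    using norm_cauchy_schwarz[of "- h'" e] by (simp add: H_def)
  have c1: "c \<le> H * norm e" using he cs by linarith
  have c2: "H * norm e \<le> H * t" using eball H0 by simp
  have "H * (\<theta> * r) \<le> H * norm e" using c1 cth by (simp add: algebra_simps)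
  hence "\<theta> * r \<le> norm e" using H0 by (simp add: mult_le_cancel_left_pos)
  hence ne: "norm e = t" using eball by (simp add: t_def)
  have c_eq: "c = \<theta> * H * r" using c1 c2 cth ne by (simp add: t_def algebra_simps)
  have he2: "h' \<bullet> e = - (H * norm e)" using he cs c_eq ne by (simp add: t_def algebra_simps)
  define v where "v = e + (norm e / H) *\<^sub>R h'"
  have "(norm v)\<^sup>2 = 0"
  proof -
    have "(norm v)\<^sup>2 = (norm e)\<^sup>2 + 2 * (norm e / H) * (e \<bullet> h') + (norm e / H)\<^sup>2 * H\<^sup>2"
      using nsq[of e "(- (norm e / H)) *\<^sub>R h'"] by (simp add: v_def H_def power_mult_distrib power_divide)
    also have "\<dots> = 0" using he2 H0 by (simp add: inner_commute field_simps power2_eq_square)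
    finally show ?thesis .
  qed
  hence "e = - (norm e / H) *\<^sub>R h'" by (simp add: v_def eq_neg_iff_add_eq_0)
  from arg_cong[OF this, of "\<lambda>x. d \<bullet> x"]
  have de: "d \<bullet> e = - (norm e / H) * c" by (simp add: c_def inner_commute)
  have "(norm u)\<^sup>2 = r\<^sup>2 + 2 * (d \<bullet> e) + (norm e)\<^sup>2"
    using nsq[of d "- e"] by (simp add: ude r_def d_def)
  also have "\<dots> = (1 - \<theta>\<^sup>2) * r\<^sup>2"
    unfolding de c_eq ne using H0 by (simp add: t_def field_simps power2_eq_square)
  finally show False using big by simp
qed

end

theorem theorem3:
  fixes X :: "'a::euclidean_space set"
    and f :: "'a \<Rightarrow> real" and g :: "'a \<Rightarrow> 'a"
    and L \<mu> :: real
    and x :: "nat \<Rightarrow> 'a" and t :: "nat \<Rightarrow> real" and xs :: 'a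
  assumes X: "X \<noteq> {}" "closed X" "convex X"
    and grad: "\<And>y. (f has_derivative (\<lambda>h. g y \<bullet> h)) (at y)"
    and smooth: "L-lipschitz_on X g"
    and strong: "\<And>u v. u \<in> X \<Longrightarrow> v \<in> X \<Longrightarrow>
                   f v \<ge> f u + g u \<bullet> (v - u) + \<mu> / 2 * (norm (v - u))\<^sup>2"
    and params: "0 < \<mu>" "\<mu> \<le> L"
    and x0: "x 0 \<in> X"
    and iter: "\<And>k. is_arg_min (\<lambda>z. g (x k) \<bullet> z) (\<lambda>z. z \<in> X \<inter> cball (x k) (t k)) (x (Suc k))"
    and xs: "is_arg_min f (\<lambda>y. y \<in> X) xs"
  defines "\<theta> \<equiv> 2 * sqrt (\<mu> * L) / (L + \<mu>)"
  shows "(\<forall>k. g (x k) \<noteq> g xs \<longrightarrow> t k = \<theta> * norm (x k - xs) \<longrightarrow>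
            (norm (x (Suc k) - xs))\<^sup>2 \<le> (1 - \<theta>\<^sup>2) * (norm (x k - xs))\<^sup>2
            \<and> (1 - \<theta>\<^sup>2) * (norm (x k - xs))\<^sup>2 = ((L - \<mu>) / (L + \<mu>))\<^sup>2 * (norm (x k - xs))\<^sup>2)
       \<and> ((\<forall>k. t k = \<theta> * norm (x k - xs)) \<longrightarrow>
            (\<forall>K. (norm (x K - xs))\<^sup>2 \<le> ((L - \<mu>) / (L + \<mu>)) ^ (2 * K) * (norm (x 0 - xs))\<^sup>2))"
proof -
  have xsX: "xs \<in> X" and xsmin: "\<And>y. y \<in> X \<Longrightarrow> f xs \<le> f y"
    using xs unfolding is_arg_min_def by (auto simp: not_less)
  have itX: "x (Suc k) \<in> X" "dist (x k) (x (Suc k)) \<le> t k"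
    and itmin: "\<And>y. y \<in> X \<Longrightarrow> dist (x k) y \<le> t k \<Longrightarrow> g (x k) \<bullet> x (Suc k) \<le> g (x k) \<bullet> y" for k
    using iter[of k] unfolding is_arg_min_def by (auto simp: not_less)
  have xX: "x k \<in> X" for k by (cases k) (auto simp: x0 itX)
  have q: "1 - \<theta>\<^sup>2 = ((L - \<mu>) / (L + \<mu>))\<^sup>2"
  proof -
    have Lm: "L + \<mu> > 0" using params by simp
    have "\<theta>\<^sup>2 = 4 * (\<mu> * L) / (L + \<mu>)\<^sup>2" using params
      by (simp add: \<theta>_def power_divide power_mult_distrib)
    moreover have D: "(L + \<mu>)\<^sup>2 \<noteq> 0" using Lm by simp
    moreover have "1 - 4 * (\<mu> * L) / (L + \<mu>)\<^sup>2 = ((L + \<mu>)\<^sup>2 - 4 * (\<mu> * L)) / (L + \<mu>)\<^sup>2"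
      using D by (simp add: diff_divide_distrib)
    moreover have "(L + \<mu>)\<^sup>2 - 4 * (\<mu> * L) = (L - \<mu>)\<^sup>2" by (simp add: power2_eq_square algebra_simps)
    ultimately show ?thesis by (simp add: power_divide)
  qed
  have step: "(norm (x (Suc k) - xs))\<^sup>2 \<le> (1 - \<theta>\<^sup>2) * (norm (x k - xs))\<^sup>2"
    if tk: "t k = \<theta> * norm (x k - xs)" for k
  proof (cases "x k = xs")
    case True
    hence "t k = 0" using tk by simp
    hence "x (Suc k) = x k" using itX(2)[of k] by simp
    thus ?thesis using True by simp
  next
    case False
    show ?thesis
    proof (rule main_step[OF X(3) grad smooth strong xX xsX xsmin itX(1)])
      show "norm (x (Suc k) - x k) \<le> \<theta> * norm (x k - xs)"
        using itX(2)[of k] tk by (simp add: dist_norm norm_minus_commute)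
      show "g (x k) \<bullet> x (Suc k) \<le> g (x k) \<bullet> y" if "y \<in> X" "norm (y - x k) \<le> \<theta> * norm (x k - xs)" for y
        using itmin[OF that(1)] that(2) tk by (simp add: dist_norm norm_minus_commute)
    qed (use params False \<theta>_def in auto)
  qed
  have part1: "\<forall>k. g (x k) \<noteq> g xs \<longrightarrow> t k = \<theta> * norm (x k - xs) \<longrightarrow>
            (norm (x (Suc k) - xs))\<^sup>2 \<le> (1 - \<theta>\<^sup>2) * (norm (x k - xs))\<^sup>2
            \<and> (1 - \<theta>\<^sup>2) * (norm (x k - xs))\<^sup>2 = ((L - \<mu>) / (L + \<mu>))\<^sup>2 * (norm (x k - xs))\<^sup>2"
    using step q by auto
  have part2: "(norm (x K - xs))\<^sup>2 \<le> ((L - \<mu>) / (L + \<mu>)) ^ (2 * K) * (norm (x 0 - xs))\<^sup>2"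
    if all: "\<forall>k. t k = \<theta> * norm (x k - xs)" for K
  proof (induction K)
    case 0 then show ?case by simp
  next
    case (Suc K)
    have "(norm (x (Suc K) - xs))\<^sup>2 \<le> ((L - \<mu>) / (L + \<mu>))\<^sup>2 * (norm (x K - xs))\<^sup>2"
      using step[of K] all q by simp
    also have "\<dots> \<le> ((L - \<mu>) / (L + \<mu>))\<^sup>2 * (((L - \<mu>) / (L + \<mu>)) ^ (2 * K) * (norm (x 0 - xs))\<^sup>2)"
      using Suc.IH by (intro mult_left_mono) auto
    also have "\<dots> = ((L - \<mu>) / (L + \<mu>)) ^ (2 * Suc K) * (norm (x 0 - xs))\<^sup>2"
    proof -
      have "\<rho> ^ (2 * Suc K) = \<rho>\<^sup>2 * \<rho> ^ (2 * K)" for \<rho> :: real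
        by (simp add: power_add[symmetric])
      thus ?thesis by (simp only: mult.assoc)
    qed
    finally show ?case .
  qed
  show ?thesis using part1 part2 by blast
qed

end
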